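(* Let $p\ge2$, $K\ge1$ be integers, $s_1\ge0$ an integer, $s_2,\dots,s_p\in\mathbb{Z}$, and $z_1,\dots,z_p$ complex numbers of modulus $<1$. Then $$\mathrm{La}^K_{-s_1,s_2,\dots,s_p}(z_1,\dots,z_p)=P_{s_1}(K,z_1)\,\mathrm{La}^K_{s_2,\dots,s_p}(z_2,\dots,z_p)-\sum_{\ell=0}^{s_1}\frac{a_{1,\ell}(s_1,z_1)}{(1-z_1)^{s_1+1}z_1}\sum_{m=0}^{\ell}\binom{\ell}{m}(-1)^{\ell-m}\mathrm{La}^K_{s_2-m,s_3,\dots,s_p}(z_1z_2,z_3,\dots,z_p)$$ $$-\sum_{\ell=0}^{s_1}\frac{a_{2,\ell}(s_1,z_1)}{(1-z_1)^{s_1+1}}\sum_{m=0}^{\ell}\binom{\ell}{m}(-1)^{\ell-m}\mathrm{La}^K_{s_2-m,s_3,\dots,s_p}(z_2,\dots,z_p).$$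
   Context: Truncated large polylogarithm: $\mathrm{La}^K_{t_1,\dots,t_r}(w_1,\dots,w_r)=\sum_{K\ge k_1\ge\cdots\ge k_r\ge1}\frac{w_1^{k_1}\cdots w_r^{k_r}}{k_1^{t_1}\cdots k_r^{t_r}}$ (equal to $1$ when $r=0$). For $s\ge0$ and $K\ge0$, $P_s(K,z)=\sum_{k=1}^Kk^sz^k=\big(z\frac{d}{dz}\big)^s\big(z\frac{1-z^K}{1-z}\big)$, and $a_{1,\ell}(s,z),a_{2,\ell}(s,z)$ ($0\le\ell\le s$) are the polynomials in $z$, independent of $K$, such that $P_s(K,z)=\sum_{\ell=0}^s\frac{z^Ka_{1,\ell}(s,z)+a_{2,\ell}(s,z)}{(1-z)^{s+1}}K^\ell$ for all $K\ge0$ (with $0^0=1$); $a_{1,\ell}(s,z)$ is divisible by $z$. *)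

theory Defs
  imports Complex_Main "HOL-Computational_Algebra.Polynomial"
begin

text \<open>Truncated large polylogarithm La^K_{t_1..t_r}(w_1..w_r), with the sum over
  K >= k_1 >= ... >= k_r >= 1, computed by peeling off the outermost index k_1. Lists of different lengths are not used.\<close>
fun La :: "nat \<Rightarrow> int list \<Rightarrow> complex list \<Rightarrow> complex" where
  "La K [] [] = 1"
| "La K (t # ts) (w # ws) =
     (\<Sum>k = 1..K. w ^ k / (of_nat k powi t) * La k ts ws)"
| "La K _ _ = 0"

definition Ps :: "nat \<Rightarrow> nat \<Rightarrow> complex \<Rightarrow> complex" where
  "Ps s K z = (\<Sum>k = 1..K. of_nat k ^ s * z ^ k)"

definition a12 :: "nat \<Rightarrow> (nat \<Rightarrow> complex poly) \<times> (nat \<Rightarrow> complex poly)" where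
  "a12 s = (THE (A1, A2).
      (\<forall>l>s. A1 l = 0 \<and> A2 l = 0) \<and>
      (\<forall>l. [:0, 1:] dvd A1 l) \<and>
      (\<forall>K z. z \<noteq> 1 \<longrightarrow>
          Ps s K z = (\<Sum>l\<le>s. (z ^ K * poly (A1 l) z + poly (A2 l) z) / (1 - z) ^ (s + 1)
                                * of_nat K ^ l)))"

definition a1 :: "nat \<Rightarrow> nat \<Rightarrow> complex poly" where
  "a1 s l = fst (a12 s) l"

definition a2 :: "nat \<Rightarrow> nat \<Rightarrow> complex poly" where
  "a2 s l = snd (a12 s) l"

end

theory Submission imports Defs begin

lemma lim_pow_zero:
  fixes z :: complex
  assumes "norm z < 1"
  shows "(\<lambda>K. of_nat K ^ l * z ^ K) \<longlonglongrightarrow> 0"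
proof (cases "l = 0")
  case True
  then show ?thesis using LIMSEQ_power_zero[OF assms] by simp
next
  case False
  define r where "r = root l (norm z)"
  have r0: "r \<ge> 0" unfolding r_def by (simp add: real_root_ge_zero)
  have r1: "r < 1" unfolding r_def using False assms by simp
  have rl: "r ^ l = norm z" unfolding r_def using False by simp
  have "(\<lambda>K. of_nat K * r ^ K) \<longlonglongrightarrow> (0::real)"
    using powser_times_n_limit_0[of r] r0 r1 by simp
  then have lim: "(\<lambda>K. (of_nat K * r ^ K) ^ l) \<longlonglongrightarrow> (0::real)"
    using tendsto_power[of _ 0 sequentially l] False by fastforce
  have bnd: "norm (of_nat K ^ l * z ^ K) \<le> norm ((of_nat K * r ^ K) ^ l) * 1" for K
  proof -
    have "norm (of_nat K ^ l * z ^ K) = (of_nat K * r ^ K) ^ l"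
      by (simp add: norm_mult norm_power power_mult_distrib rl[symmetric] power_mult[symmetric] mult.commute)
    also have "\<dots> = norm ((of_nat K * r ^ K) ^ l)" using r0 by simp
    finally show ?thesis by simp
  qed
  have ev: "eventually (\<lambda>K. norm (of_nat K ^ l * z ^ K) \<le> norm ((of_nat K * r ^ K) ^ l) * 1) sequentially"
    by (intro always_eventually allI bnd)
  show ?thesis by (rule tendsto_0_le[OF lim ev])
qed

lemma inv_pow_lim: "(\<lambda>K. inverse (of_nat K ^ m) :: complex) \<longlonglongrightarrow> 0" if "m > 0"
proof -
  have "(\<lambda>K. inverse (of_nat K :: complex) ^ m) \<longlonglongrightarrow> 0 ^ m"
    by (intro tendsto_power lim_inverse_n)
  then show ?thesis using that by (simp add: power_inverse zero_power)
qed

lemma polyK_zero: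
  fixes c :: "nat \<Rightarrow> complex"
  assumes "(\<lambda>K. \<Sum>l\<le>s. c l * of_nat K ^ l) \<longlonglongrightarrow> 0"
  shows "\<forall>l\<le>s. c l = 0"
  using assms
proof (induction s)
  case 0
  then show ?case by (simp add: LIMSEQ_const_iff)
next
  case (Suc s)
  define S where "S K = (\<Sum>l\<le>Suc s. c l * of_nat K ^ l)" for K
  have bnd: "norm (S K * inverse (of_nat K ^ Suc s)) \<le> norm (S K) * 1" for K
  proof (cases "K = 0")
    case False
    have p1: "1 \<le> real K ^ Suc s" using False by (intro one_le_power) simp
    have "norm (inverse (of_nat K ^ Suc s) :: complex) = inverse (real K ^ Suc s)"
      by (simp only: norm_inverse norm_power norm_of_nat)
    also have "\<dots> \<le> 1" using p1 by (simp only: inverse_le_1_iff) simp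
    finally have "norm (inverse (of_nat K ^ Suc s) :: complex) \<le> 1" .
    then show ?thesis by (simp add: norm_mult mult_left_le)
  qed simp
  have A: "(\<lambda>K. S K * inverse (of_nat K ^ Suc s)) \<longlonglongrightarrow> 0"
    by (rule tendsto_0_le[where K=1, OF Suc.prems[folded S_def]]) (intro always_eventually allI bnd)
  have B: "(\<lambda>K. \<Sum>l\<le>s. c l * inverse (of_nat K ^ (Suc s - l))) \<longlonglongrightarrow> 0"
    by (intro tendsto_null_sum tendsto_mult_right_zero inv_pow_lim) auto
  have eq: "S K * inverse (of_nat K ^ Suc s) = c (Suc s) + (\<Sum>l\<le>s. c l * inverse (of_nat K ^ (Suc s - l)))"
    if "K > 0" for K
  proof -
    have "S K * inverse (of_nat K ^ Suc s) = c (Suc s) + (\<Sum>l\<le>s. c l * of_nat K ^ l * inverse (of_nat K ^ Suc s))"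
    proof -
      have nz: "of_nat K ^ Suc s \<noteq> (0::complex)" using that by simp
      show ?thesis unfolding S_def sum.atMost_Suc distrib_right sum_distrib_right
        using nz by (simp add: mult.assoc del: power_Suc)
    qed
    also have "(\<Sum>l\<le>s. c l * of_nat K ^ l * inverse (of_nat K ^ Suc s)) = (\<Sum>l\<le>s. c l * inverse (of_nat K ^ (Suc s - l)))"
    proof (rule sum.cong)
      fix l assume "l \<in> {..s}"
      then have "of_nat K ^ Suc s = (of_nat K ^ l * of_nat K ^ (Suc s - l) :: complex)"
        by (simp add: power_add[symmetric])
      then show "c l * of_nat K ^ l * inverse (of_nat K ^ Suc s) = c l * inverse (of_nat K ^ (Suc s - l))"
        using that by simp
    qed simp
    finally show ?thesis .
  qed
  have "(\<lambda>K. c (Suc s) + (\<Sum>l\<le>s. c l * inverse (of_nat K ^ (Suc s - l)))) \<longlonglongrightarrow> 0"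
  proof (rule Lim_transform_eventually[OF A])
    show "\<forall>\<^sub>F K in sequentially. S K * inverse (of_nat K ^ Suc s) = c (Suc s) + (\<Sum>l\<le>s. c l * inverse (of_nat K ^ (Suc s - l)))"
      using eventually_gt_at_top[of 0] by eventually_elim (rule eq)
  qed
  moreover have "(\<lambda>K. c (Suc s) + (\<Sum>l\<le>s. c l * inverse (of_nat K ^ (Suc s - l)))) \<longlonglongrightarrow> c (Suc s) + 0"
    by (intro tendsto_add tendsto_const B)
  ultimately have cs: "c (Suc s) = 0" using LIMSEQ_unique by fastforce
  then have "\<forall>l\<le>s. c l = 0" using Suc.IH Suc.prems by simp
  then show ?case using cs le_Suc_eq by auto
qed

lemma poly_zero_on_pts:
  fixes D :: "complex poly"
  assumes "\<And>n. poly D (complex_of_real (1 / (real n + 2))) = 0"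
  shows "D = 0"
proof (rule ccontr)
  assume "D \<noteq> 0"
  then have fin: "finite {x. poly D x = 0}" by (rule poly_roots_finite)
  have inj: "inj (\<lambda>n. complex_of_real (1 / (real n + 2)))"
    by (rule injI) (simp add: field_simps)
  have "range (\<lambda>n. complex_of_real (1 / (real n + 2))) \<subseteq> {x. poly D x = 0}"
    using assms by auto
  then have "finite (range (\<lambda>n. complex_of_real (1 / (real n + 2))))"
    using fin finite_subset by blast
  then show False using range_inj_infinite[OF inj] by simp
qed

lemma uniq_core:
  fixes D1 D2 :: "nat \<Rightarrow> complex poly"
  assumes H: "\<And>K z. z \<noteq> 1 \<Longrightarrow> (\<Sum>l\<le>s. (z ^ K * poly (D1 l) z + poly (D2 l) z) * of_nat K ^ l) = 0"
  shows "\<forall>l\<le>s. D1 l = 0 \<and> D2 l = 0"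
proof -
  have pt: "\<forall>l\<le>s. poly (D1 l) z = 0 \<and> poly (D2 l) z = 0" if z: "norm z < 1" "z \<noteq> 0" for z
  proof -
    have z1: "z \<noteq> 1" using z by auto
    have e: "(\<Sum>l\<le>s. poly (D2 l) z * of_nat K ^ l) = - (\<Sum>l\<le>s. poly (D1 l) z * (of_nat K ^ l * z ^ K))" for K
    proof -
      have "(\<Sum>l\<le>s. poly (D1 l) z * (of_nat K ^ l * z ^ K)) + (\<Sum>l\<le>s. poly (D2 l) z * of_nat K ^ l) = 0"
      proof -
        have "(\<Sum>l\<le>s. poly (D1 l) z * (of_nat K ^ l * z ^ K)) + (\<Sum>l\<le>s. poly (D2 l) z * of_nat K ^ l)
            = (\<Sum>l\<le>s. (z ^ K * poly (D1 l) z + poly (D2 l) z) * of_nat K ^ l)"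
          unfolding sum.distrib[symmetric] by (rule sum.cong) (simp_all add: algebra_simps)
        then show ?thesis using H[OF z1, of K] by simp
      qed
      then show ?thesis by (simp add: eq_neg_iff_add_eq_0 add.commute)
    qed
    have "(\<lambda>K. \<Sum>l\<le>s. poly (D1 l) z * (of_nat K ^ l * z ^ K)) \<longlonglongrightarrow> 0"
      by (intro tendsto_null_sum tendsto_mult_right_zero lim_pow_zero z)
    from tendsto_minus[OF this] have "(\<lambda>K. \<Sum>l\<le>s. poly (D2 l) z * of_nat K ^ l) \<longlonglongrightarrow> 0"
      by (simp add: e)
    then have c2: "\<forall>l\<le>s. poly (D2 l) z = 0" by (rule polyK_zero)
    have "(\<Sum>l\<le>s. poly (D1 l) z * of_nat K ^ l) = 0" for K
    proof -
      have "z ^ K * (\<Sum>l\<le>s. poly (D1 l) z * of_nat K ^ l) = 0"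
        using H[OF z1, of K] c2 by (simp add: distrib_right sum_distrib_left mult_ac)
      then show ?thesis using z by simp
    qed
    then have "(\<lambda>K. \<Sum>l\<le>s. poly (D1 l) z * of_nat K ^ l) \<longlonglongrightarrow> 0" by simp
    then have c1: "\<forall>l\<le>s. poly (D1 l) z = 0" by (rule polyK_zero)
    show ?thesis using c1 c2 by simp
  qed
  have pts: "norm (complex_of_real (1 / (real n + 2))) < 1" "complex_of_real (1 / (real n + 2)) \<noteq> 0" for n
  proof -
    show "norm (complex_of_real (1 / (real n + 2))) < 1" by (simp only: norm_of_real) simp
    show "complex_of_real (1 / (real n + 2)) \<noteq> 0" by (simp only: of_real_eq_0_iff) simp
  qed
  show ?thesis
  proof (intro allI impI conjI)
    fix l assume "l \<le> s"
    then show "D1 l = 0" "D2 l = 0" using pt[OF pts] by (auto intro!: poly_zero_on_pts)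
  qed
qed

definition cc :: "nat \<Rightarrow> nat \<Rightarrow> complex" where
  "cc s j = - (of_nat (s choose j) * (-1) ^ (s - j))"

lemma T_rec: "(1 - z) * Ps s K z + of_nat K ^ s * z ^ (K + 1)
   = 0 ^ s * z + (\<Sum>k=1..K. ((of_nat k) ^ s - (of_nat k - 1) ^ s) * z ^ k)"
proof (induction K)
  case 0
  then show ?case by (simp add: Ps_def)
next
  case (Suc K)
  have P: "Ps s (Suc K) z = Ps s K z + of_nat (Suc K) ^ s * z ^ Suc K"
    by (simp add: Ps_def)
  have "(1 - z) * Ps s (Suc K) z + of_nat (Suc K) ^ s * z ^ (Suc K + 1)
      = ((1 - z) * Ps s K z + of_nat K ^ s * z ^ (K + 1))
        + (of_nat (Suc K) ^ s - of_nat K ^ s) * z ^ Suc K"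
    unfolding P by (simp add: algebra_simps)
  also have "\<dots> = 0 ^ s * z + (\<Sum>k=1..Suc K. ((of_nat k) ^ s - (of_nat k - 1) ^ s) * z ^ k)"
    unfolding Suc.IH by simp
  finally show ?case .
qed

lemma diff_pow: "(of_nat k :: complex) ^ s - (of_nat k - 1) ^ s = (\<Sum>j<s. cc s j * of_nat k ^ j)"
proof -
  have "(of_nat k - 1 :: complex) ^ s = (of_nat k + (-1)) ^ s" by simp
  also have "\<dots> = (\<Sum>j\<le>s. of_nat (s choose j) * of_nat k ^ j * (-1) ^ (s - j))"
    by (rule binomial_ring)
  also have "\<dots> = (\<Sum>j<s. of_nat (s choose j) * of_nat k ^ j * (-1) ^ (s - j)) + of_nat k ^ s"
    by (simp add: lessThan_Suc_atMost[symmetric])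
  finally show ?thesis by (simp add: cc_def sum_negf[symmetric] mult_ac)
qed

lemma Ps_rec: "(1 - z) * Ps s K z = 0 ^ s * z + (\<Sum>j<s. cc s j * Ps j K z) - of_nat K ^ s * z ^ (K + 1)"
proof -
  have "(\<Sum>k=1..K. ((of_nat k) ^ s - (of_nat k - 1) ^ s) * z ^ k) = (\<Sum>k=1..K. \<Sum>j<s. cc s j * (of_nat k ^ j * z ^ k))"
    by (simp add: diff_pow sum_distrib_right sum_distrib_left mult_ac)
  also have "\<dots> = (\<Sum>j<s. cc s j * Ps j K z)"
    by (subst sum.swap) (simp add: Ps_def sum_distrib_left)
  finally show ?thesis using T_rec[of z s K] by (simp add: algebra_simps)
qed

definition propA :: "nat \<Rightarrow> (nat \<Rightarrow> complex poly) \<Rightarrow> (nat \<Rightarrow> complex poly) \<Rightarrow> bool" where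
  "propA s A1 A2 \<longleftrightarrow> (\<forall>l>s. A1 l = 0 \<and> A2 l = 0) \<and> (\<forall>l. [:0, 1:] dvd A1 l) \<and>
     (\<forall>K z. z \<noteq> 1 \<longrightarrow> (1 - z) ^ (s + 1) * Ps s K z
        = (\<Sum>l\<le>s. (z ^ K * poly (A1 l) z + poly (A2 l) z) * of_nat K ^ l))"

lemma exA: "\<exists>A1 A2. propA s A1 A2"
proof (induction s rule: less_induct)
  case (less s)
  then have "\<forall>j. \<exists>A. j < s \<longrightarrow> propA j (fst A) (snd A)" by auto
  then obtain F where F: "\<And>j. j < s \<Longrightarrow> propA j (fst (F j)) (snd (F j))" by metis
  define X :: "complex poly" where "X = [:1, -1:]"
  have pX: "poly X z = 1 - z" for z by (simp add: X_def)
  define B1 where "B1 l = (if l \<le> s then (\<Sum>j<s. smult (cc s j) (X ^ (s - Suc j) * fst (F j) l))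
      - (if l = s then X ^ s * [:0, 1:] else 0) else 0)" for l
  define B2 where "B2 l = (if l \<le> s then (\<Sum>j<s. smult (cc s j) (X ^ (s - Suc j) * snd (F j) l))
      + (if l = 0 \<and> s = 0 then [:0, 1:] else 0) else 0)" for l
  have P1: "\<forall>l>s. B1 l = 0 \<and> B2 l = 0" by (simp add: B1_def B2_def)
  have P2: "[:0, 1:] dvd B1 l" for l
  proof -
    have "[:0, 1:] dvd fst (F j) l" if "j < s" for j using F[OF that] by (simp add: propA_def)
    moreover have "[:0, 1:] dvd pCons 0 q" for q :: "complex poly"
    proof -
      have "pCons 0 q = [:0, 1:] * q" by simp
      then show ?thesis by (metis dvd_triv_left)
    qed
    ultimately show ?thesis unfolding B1_def
      by (auto intro!: dvd_sum dvd_diff dvd_smult dvd_mult)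
  qed
  have P3: "(1 - z) ^ (s + 1) * Ps s K z
        = (\<Sum>l\<le>s. (z ^ K * poly (B1 l) z + poly (B2 l) z) * of_nat K ^ l)" if z1: "z \<noteq> 1" for K z
  proof -
    define G where "G j l = (z ^ K * poly (fst (F j) l) z + poly (snd (F j) l) z) * of_nat K ^ l" for j l
    have Fj: "(1 - z) ^ (j + 1) * Ps j K z = (\<Sum>l\<le>s. G j l)" if "j < s" for j
    proof -
      have "(1 - z) ^ (j + 1) * Ps j K z = (\<Sum>l\<le>j. G j l)"
        using F[OF that] z1 by (simp add: propA_def G_def)
      also have "\<dots> = (\<Sum>l\<le>s. G j l)"
        using F[OF that] that by (intro sum.mono_neutral_left) (auto simp: propA_def G_def)
      finally show ?thesis .
    qed
    have trm: "(z ^ K * poly (B1 l) z + poly (B2 l) z) * of_nat K ^ l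
       = (\<Sum>j<s. cc s j * (1 - z) ^ (s - Suc j) * G j l)
         - (if l = s then (1 - z) ^ s * z ^ (K + 1) * of_nat K ^ s else 0)
         + (if l = 0 \<and> s = 0 then z else 0)" if "l \<le> s" for l
      using that by (simp add: B1_def B2_def G_def poly_sum pX sum_distrib_left sum_distrib_right
          sum_subtractf[symmetric] sum.distrib[symmetric] algebra_simps)
    have "(\<Sum>l\<le>s. (z ^ K * poly (B1 l) z + poly (B2 l) z) * of_nat K ^ l)
       = (\<Sum>l\<le>s. (\<Sum>j<s. cc s j * (1 - z) ^ (s - Suc j) * G j l))
         - (1 - z) ^ s * z ^ (K + 1) * of_nat K ^ s + 0 ^ s * z"
      apply (subst sum.cong[OF refl trm], simp)
      by (cases s) (simp_all add: sum.distrib sum_subtractf)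
    also have "(\<Sum>l\<le>s. (\<Sum>j<s. cc s j * (1 - z) ^ (s - Suc j) * G j l))
       = (\<Sum>j<s. cc s j * (1 - z) ^ (s - Suc j) * ((1 - z) ^ (j + 1) * Ps j K z))"
    proof (subst sum.swap, rule sum.cong)
      fix j assume "j \<in> {..<s}"
      then have "j < s" by simp
      show "(\<Sum>l\<le>s. cc s j * (1 - z) ^ (s - Suc j) * G j l) = cc s j * (1 - z) ^ (s - Suc j) * ((1 - z) ^ (j + 1) * Ps j K z)"
        by (simp only: Fj[OF \<open>j < s\<close>] sum_distrib_left)
    qed simp
    also have "\<dots> = (\<Sum>j<s. (1 - z) ^ s * (cc s j * Ps j K z))"
    proof (rule sum.cong)
      fix j assume "j \<in> {..<s}"
      then have "(1 - z) ^ (s - Suc j) * (1 - z) ^ (j + 1) = (1 - z) ^ s"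
        by (simp only: power_add[symmetric]) simp
      then show "cc s j * (1 - z) ^ (s - Suc j) * ((1 - z) ^ (j + 1) * Ps j K z) = (1 - z) ^ s * (cc s j * Ps j K z)"
        by (metis mult.assoc mult.commute)
    qed simp
    also have "\<dots> = (1 - z) ^ s * (\<Sum>j<s. cc s j * Ps j K z)" by (simp add: sum_distrib_left)
    finally have R: "(\<Sum>l\<le>s. (z ^ K * poly (B1 l) z + poly (B2 l) z) * of_nat K ^ l)
       = (1 - z) ^ s * (\<Sum>j<s. cc s j * Ps j K z) - (1 - z) ^ s * z ^ (K + 1) * of_nat K ^ s + 0 ^ s * z" .
    have "(1 - z) ^ (s + 1) * Ps s K z = (1 - z) ^ s * ((1 - z) * Ps s K z)" by simp
    also have "\<dots> = (1 - z) ^ s * (0 ^ s * z + (\<Sum>j<s. cc s j * Ps j K z) - of_nat K ^ s * z ^ (K + 1))"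
      by (simp only: Ps_rec)
    also have "\<dots> = (1 - z) ^ s * (\<Sum>j<s. cc s j * Ps j K z) - (1 - z) ^ s * z ^ (K + 1) * of_nat K ^ s + 0 ^ s * z"
      by (cases s) (simp_all add: algebra_simps)
    finally show ?thesis using R by simp
  qed
  show ?case using P1 P2 P3 unfolding propA_def by blast
qed


lemma div_form_iff:
  fixes x :: "nat \<Rightarrow> complex" and d :: complex
  assumes "d \<noteq> 0"
  shows "(P = (\<Sum>l\<le>s. x l / d * of_nat K ^ l))
     \<longleftrightarrow> (d * P = (\<Sum>l\<le>s. x l * of_nat K ^ l))"
proof -
  have e: "(\<Sum>l\<le>s. x l / d * of_nat K ^ l) = (\<Sum>l\<le>s. x l * of_nat K ^ l) / d"
    by (simp add: sum_divide_distrib)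
  show ?thesis unfolding e using assms by (simp only: eq_divide_eq if_True) (auto simp: mult.commute)
qed

lemma a12_unique_ex:
  "\<exists>!x. (case x of (A1, A2) \<Rightarrow>
      (\<forall>l>s. A1 l = 0 \<and> A2 l = 0) \<and>
      (\<forall>l. [:0, 1:] dvd A1 l) \<and>
      (\<forall>K z. z \<noteq> 1 \<longrightarrow>
          Ps s K z = (\<Sum>l\<le>s. (z ^ K * poly (A1 l) z + poly (A2 l) z) / (1 - z) ^ (s + 1)
                                * of_nat K ^ l)))"
    (is "\<exists>!x. ?Q x")
proof -
  have Q_iff: "?Q (A1, A2) \<longleftrightarrow> propA s A1 A2" for A1 A2
    unfolding propA_def using div_form_iff by simp
  obtain A1 A2 where A: "propA s A1 A2" using exA by blast
  show ?thesis
  proof (rule ex1I[of _ "(A1, A2)"])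
    show "?Q (A1, A2)" using A Q_iff by blast
  next
    fix y assume "?Q y"
    then obtain B1 B2 where y: "y = (B1, B2)" and B: "propA s B1 B2" using Q_iff by (cases y) auto
    have H: "(\<Sum>l\<le>s. (z ^ K * poly (B1 l - A1 l) z + poly (B2 l - A2 l) z) * of_nat K ^ l) = 0"
      if "z \<noteq> 1" for K z
    proof -
      have "(\<Sum>l\<le>s. (z ^ K * poly (B1 l - A1 l) z + poly (B2 l - A2 l) z) * of_nat K ^ l)
          = (\<Sum>l\<le>s. (z ^ K * poly (B1 l) z + poly (B2 l) z) * of_nat K ^ l)
            - (\<Sum>l\<le>s. (z ^ K * poly (A1 l) z + poly (A2 l) z) * of_nat K ^ l)"
        unfolding sum_subtractf[symmetric] by (rule sum.cong) (simp_all add: algebra_simps)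
      also have "\<dots> = 0" using A B that unfolding propA_def by simp
      finally show ?thesis .
    qed
    have "\<forall>l\<le>s. B1 l - A1 l = 0 \<and> B2 l - A2 l = 0" by (rule uniq_core) (rule H)
    moreover have "\<forall>l>s. B1 l = A1 l \<and> B2 l = A2 l" using A B unfolding propA_def by simp
    ultimately have "B1 = A1" "B2 = A2" by (auto intro!: ext simp: not_le[symmetric])
    then show "y = (A1, A2)" using y by simp
  qed
qed

lemma a_props: "(\<forall>l. [:0, 1:] dvd a1 s l) \<and>
   (\<forall>K z. z \<noteq> 1 \<longrightarrow> (1 - z) ^ (s + 1) * Ps s K z
        = (\<Sum>l\<le>s. (z ^ K * poly (a1 s l) z + poly (a2 s l) z) * of_nat K ^ l))"
proof -
  have "case a12 s of (A1, A2) \<Rightarrow>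
      (\<forall>l>s. A1 l = 0 \<and> A2 l = 0) \<and>
      (\<forall>l. [:0, 1:] dvd A1 l) \<and>
      (\<forall>K z. z \<noteq> 1 \<longrightarrow>
          Ps s K z = (\<Sum>l\<le>s. (z ^ K * poly (A1 l) z + poly (A2 l) z) / (1 - z) ^ (s + 1)
                                * of_nat K ^ l))"
    unfolding a12_def by (rule theI'[OF a12_unique_ex])
  then have "propA s (a1 s) (a2 s)"
    unfolding a1_def a2_def propA_def using div_form_iff by (cases "a12 s") simp
  then show ?thesis unfolding propA_def by blast
qed


lemma swap_tri:
  fixes g f :: "nat \<Rightarrow> 'a::comm_ring"
  shows "(\<Sum>k=1..K. g k * (\<Sum>j=1..k. f j)) = (\<Sum>k=1..K. g k) * (\<Sum>j=1..K. f j) - (\<Sum>j=1..K. f j * (\<Sum>k=1..j-1. g k))"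
proof (induction K)
  case 0
  then show ?case by simp
next
  case (Suc K)
  then show ?case by (simp add: algebra_simps)
qed

lemma triple_swap:
  fixes A :: "'l \<Rightarrow> 'a::comm_ring"
  shows "(\<Sum>j\<in>J. \<Sum>l\<in>L. A l * (\<Sum>m\<in>M l. c l m * F m j)) = (\<Sum>l\<in>L. A l * (\<Sum>m\<in>M l. c l m * (\<Sum>j\<in>J. F m j)))"
proof -
  have "(\<Sum>j\<in>J. \<Sum>l\<in>L. A l * (\<Sum>m\<in>M l. c l m * F m j)) = (\<Sum>l\<in>L. \<Sum>j\<in>J. \<Sum>m\<in>M l. A l * c l m * F m j)"
    by (subst sum.swap) (simp add: sum_distrib_left mult.assoc)
  also have "\<dots> = (\<Sum>l\<in>L. \<Sum>m\<in>M l. \<Sum>j\<in>J. A l * c l m * F m j)"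
    by (rule sum.cong[OF refl], rule sum.swap)
  also have "\<dots> = (\<Sum>l\<in>L. A l * (\<Sum>m\<in>M l. c l m * (\<Sum>j\<in>J. F m j)))"
    by (simp add: sum_distrib_left mult.assoc)
  finally show ?thesis .
qed

lemma upt_two: "p \<ge> 2 \<Longrightarrow> [2..<p+1] = 2 # [3..<p+1]"
  by (simp add: upt_conv_Cons numeral_3_eq_3 numeral_2_eq_2)
lemma upt_one: "p \<ge> 2 \<Longrightarrow> [1..<p+1] = 1 # [2..<p+1]"
  by (simp add: upt_conv_Cons numeral_2_eq_2)


lemma alg1: "(f::complex) * ((x * q + b) / d * S) = q / d * (f * (x * S)) + b / d * (f * S)"
  by (simp add: divide_inverse algebra_simps)

theorem mainTheorem9:
  fixes p K :: nat and s :: "nat \<Rightarrow> int" and z :: "nat \<Rightarrow> complex"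
  assumes "p \<ge> 2" and "K \<ge> 1" and "s 1 \<ge> 0"
    and "\<forall>i \<in> {1..p}. norm (z i) < 1"
  shows "La K ((- s 1) # map s [2..<p+1]) (map z [1..<p+1]) =
      Ps (nat (s 1)) K (z 1) * La K (map s [2..<p+1]) (map z [2..<p+1])
    - (\<Sum>l\<le>nat (s 1). poly (a1 (nat (s 1)) l div [:0, 1:]) (z 1) / (1 - z 1) ^ (nat (s 1) + 1)
         * (\<Sum>m\<le>l. of_nat (l choose m) * (-1) ^ (l - m)
              * La K ((s 2 - int m) # map s [3..<p+1]) ((z 1 * z 2) # map z [3..<p+1])))
    - (\<Sum>l\<le>nat (s 1). poly (a2 (nat (s 1)) l) (z 1) / (1 - z 1) ^ (nat (s 1) + 1)
         * (\<Sum>m\<le>l. of_nat (l choose m) * (-1) ^ (l - m)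
              * La K ((s 2 - int m) # map s [3..<p+1]) (map z [2..<p+1])))"
proof -
  define n where "n = nat (s 1)"
  have sn: "s 1 = int n" using assms(3) by (simp add: n_def)
  define rest where "rest = map s [3..<p+1]"
  define rw where "rw = map z [3..<p+1]"
  have ts: "map s [2..<p+1] = s 2 # rest" using upt_two[OF assms(1)] by (simp add: rest_def)
  have ws: "map z [2..<p+1] = z 2 # rw" using upt_two[OF assms(1)] by (simp add: rw_def)
  have zs: "map z [1..<p+1] = z 1 # z 2 # rw" using upt_one[OF assms(1)] ws by simp
  have "norm (z 1) < 1" using assms(1,4) by simp
  then have z1: "z 1 \<noteq> 1" by auto
  define L where "L j = La j rest rw" for j
  define f where "f j = z 2 ^ j / (of_nat j powi s 2) * L j" for j
  define den where "den = (1 - z 1) ^ (n + 1)"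
  have den0: "den \<noteq> 0" using z1 by (simp add: den_def)
  define q where "q l = poly (a1 n l div [:0, 1:]) (z 1)" for l
  define b where "b l = poly (a2 n l) (z 1)" for l
  define cb where "cb l m = of_nat (l choose m) * (-1::complex) ^ (l - m)" for l m
  define F1 where "F1 m j = (z 1 * z 2) ^ j / (of_nat j powi (s 2 - int m)) * L j" for m j
  define F2 where "F2 m j = z 2 ^ j / (of_nat j powi (s 2 - int m)) * L j" for m j
  have LHS: "La K ((- s 1) # map s [2..<p+1]) (map z [1..<p+1])
      = (\<Sum>k=1..K. (of_nat k ^ n * z 1 ^ k) * (\<Sum>j=1..k. f j))"
    unfolding ts zs
  proof (subst La.simps(2), rule sum.cong[OF refl])
    fix k assume "k \<in> {1..K}"
    have "z 1 ^ k / (of_nat k powi (- s 1)) = of_nat k ^ n * z 1 ^ k"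
      unfolding sn by (simp add: power_int_minus divide_inverse)
    moreover have "La k (s 2 # rest) (z 2 # rw) = (\<Sum>j=1..k. f j)"
      by (simp add: f_def L_def)
    ultimately show "z 1 ^ k / (of_nat k powi (- s 1)) * La k (s 2 # rest) (z 2 # rw)
        = (of_nat k ^ n * z 1 ^ k) * (\<Sum>j=1..k. f j)" by simp
  qed
  have S: "(\<Sum>k=1..K. (of_nat k ^ n * z 1 ^ k) * (\<Sum>j=1..k. f j))
      = Ps n K (z 1) * (\<Sum>j=1..K. f j) - (\<Sum>j=1..K. f j * Ps n (j - 1) (z 1))"
    using swap_tri[of "\<lambda>k. of_nat k ^ n * z 1 ^ k" f K] by (simp add: Ps_def)
  have first: "(\<Sum>j=1..K. f j) = La K (map s [2..<p+1]) (map z [2..<p+1])"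
    unfolding ts ws by (simp add: f_def L_def)
  have pt: "f j * Ps n (j - 1) (z 1) = (\<Sum>l\<le>n. q l / den * (\<Sum>m\<le>l. cb l m * F1 m j))
      + (\<Sum>l\<le>n. b l / den * (\<Sum>m\<le>l. cb l m * F2 m j))" if j1: "j \<ge> 1" for j
  proof -
    have "den * Ps n (j - 1) (z 1) = (\<Sum>l\<le>n. (z 1 ^ (j - 1) * poly (a1 n l) (z 1) + b l) * of_nat (j - 1) ^ l)"
      using a_props[of n] z1 by (simp add: den_def b_def)
    then have Pexp: "Ps n (j - 1) (z 1) = (\<Sum>l\<le>n. (z 1 ^ (j - 1) * poly (a1 n l) (z 1) + b l) / den * of_nat (j - 1) ^ l)"
      by (rule div_form_iff[OF den0, where x="\<lambda>l. z 1 ^ (j - 1) * poly (a1 n l) (z 1) + b l", THEN iffD2])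
    have a1q: "z 1 ^ (j - 1) * poly (a1 n l) (z 1) = z 1 ^ j * q l" for l
    proof -
      have "a1 n l = [:0, 1:] * (a1 n l div [:0, 1:])"
      proof -
        have "[:0, 1:] dvd a1 n l" using a_props[of n] by blast
        then show ?thesis by (rule dvd_mult_div_cancel[symmetric])
      qed
      then have "poly (a1 n l) (z 1) = poly ([:0, 1:] * (a1 n l div [:0, 1:])) (z 1)" by simp
      then have "poly (a1 n l) (z 1) = z 1 * q l" unfolding q_def by (simp only: poly_mult) simp
      moreover have "z 1 ^ j = z 1 ^ (j - 1) * z 1" using j1 by (cases j) simp_all
      ultimately show ?thesis by simp
    qed
    have bin: "(of_nat (j - 1) :: complex) ^ l = (\<Sum>m\<le>l. cb l m * of_nat j ^ m)" for l
    proof -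
      have e: "(of_nat (j - 1) :: complex) = of_nat j + (-1)" using j1 by (simp add: of_nat_diff)
      have "(of_nat (j - 1) :: complex) ^ l = (\<Sum>m\<le>l. of_nat (l choose m) * of_nat j ^ m * (-1) ^ (l - m))"
        unfolding e by (rule binomial_ring)
      then show ?thesis by (simp add: cb_def mult_ac)
    qed
    have jn0: "(of_nat j :: complex) \<noteq> 0" using j1 by simp
    have pw: "(of_nat j :: complex) powi (s 2 - int m) = of_nat j powi s 2 / of_nat j ^ m" for m
      using jn0 by (simp add: power_int_diff)
    have K1: "f j * (z 1 ^ j * of_nat j ^ m) = F1 m j" for m
      using jn0 by (simp add: f_def F1_def pw power_mult_distrib field_simps)
    have K2: "f j * of_nat j ^ m = F2 m j" for m
      using jn0 by (simp add: f_def F2_def pw field_simps)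
    have "f j * Ps n (j - 1) (z 1) = (\<Sum>l\<le>n. f j * ((z 1 ^ j * q l + b l) / den * (\<Sum>m\<le>l. cb l m * of_nat j ^ m)))"
      unfolding Pexp a1q bin by (simp add: sum_distrib_left)
    also have "\<dots> = (\<Sum>l\<le>n. q l / den * (\<Sum>m\<le>l. cb l m * F1 m j) + b l / den * (\<Sum>m\<le>l. cb l m * F2 m j))"
    proof (rule sum.cong[OF refl])
      fix l
      have "f j * ((z 1 ^ j * q l + b l) / den * (\<Sum>m\<le>l. cb l m * of_nat j ^ m))
          = q l / den * (\<Sum>m\<le>l. cb l m * (f j * (z 1 ^ j * of_nat j ^ m))) + b l / den * (\<Sum>m\<le>l. cb l m * (f j * of_nat j ^ m))"
      proof -
        define S where "S = (\<Sum>m\<le>l. cb l m * (of_nat j :: complex) ^ m)"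
        have e1: "f j * (z 1 ^ j * S) = (\<Sum>m\<le>l. cb l m * (f j * (z 1 ^ j * of_nat j ^ m)))"
          unfolding S_def sum_distrib_left by (rule sum.cong[OF refl]) (simp only: mult_ac)
        have e2: "f j * S = (\<Sum>m\<le>l. cb l m * (f j * of_nat j ^ m))"
          unfolding S_def sum_distrib_left by (rule sum.cong[OF refl]) (simp only: mult_ac)
        have "f j * ((z 1 ^ j * q l + b l) / den * S) = q l / den * (f j * (z 1 ^ j * S)) + b l / den * (f j * S)"
          by (simp only: alg1)
        then have "f j * ((z 1 ^ j * q l + b l) / den * S) = q l / den * (\<Sum>m\<le>l. cb l m * (f j * (z 1 ^ j * of_nat j ^ m))) + b l / den * (\<Sum>m\<le>l. cb l m * (f j * of_nat j ^ m))" by (simp only: e1 e2)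
        then show ?thesis by (simp only: S_def)
      qed
      then show "f j * ((z 1 ^ j * q l + b l) / den * (\<Sum>m\<le>l. cb l m * of_nat j ^ m))
          = q l / den * (\<Sum>m\<le>l. cb l m * F1 m j) + b l / den * (\<Sum>m\<le>l. cb l m * F2 m j)"
        by (simp only: K1 K2)
    qed
    finally show ?thesis by (simp add: sum.distrib)
  qed
  have sum2: "(\<Sum>j=1..K. f j * Ps n (j - 1) (z 1))
     = (\<Sum>l\<le>n. q l / den * (\<Sum>m\<le>l. cb l m * (\<Sum>j=1..K. F1 m j)))
     + (\<Sum>l\<le>n. b l / den * (\<Sum>m\<le>l. cb l m * (\<Sum>j=1..K. F2 m j)))"
  proof -
    have "(\<Sum>j=1..K. f j * Ps n (j - 1) (z 1)) = (\<Sum>j=1..K. (\<Sum>l\<le>n. q l / den * (\<Sum>m\<le>l. cb l m * F1 m j))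
      + (\<Sum>l\<le>n. b l / den * (\<Sum>m\<le>l. cb l m * F2 m j)))"
      by (rule sum.cong[OF refl], rule pt) simp
    also have "\<dots> = (\<Sum>j=1..K. \<Sum>l\<le>n. q l / den * (\<Sum>m\<le>l. cb l m * F1 m j))
      + (\<Sum>j=1..K. \<Sum>l\<le>n. b l / den * (\<Sum>m\<le>l. cb l m * F2 m j))"
      by (rule sum.distrib)
    also have "\<dots> = (\<Sum>l\<le>n. q l / den * (\<Sum>m\<le>l. cb l m * (\<Sum>j=1..K. F1 m j)))
     + (\<Sum>l\<le>n. b l / den * (\<Sum>m\<le>l. cb l m * (\<Sum>j=1..K. F2 m j)))"
      by (simp only: triple_swap)
    finally show ?thesis .
  qed
  have La1: "La K ((s 2 - int m) # map s [3..<p+1]) ((z 1 * z 2) # map z [3..<p+1]) = (\<Sum>j=1..K. F1 m j)" for m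
    unfolding rest_def[symmetric] rw_def[symmetric] by (simp add: F1_def L_def)
  have La2: "La K ((s 2 - int m) # map s [3..<p+1]) (map z [2..<p+1]) = (\<Sum>j=1..K. F2 m j)" for m
    unfolding ws rest_def[symmetric] rw_def[symmetric] by (simp add: F2_def L_def)
  show ?thesis
    unfolding n_def[symmetric] LHS S first sum2 La1 La2 q_def[symmetric] b_def[symmetric]
      den_def[symmetric] cb_def[symmetric]
    by (simp only: diff_diff_eq)
qed

end
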